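(* Let $K_{w,F}$ be an allowed folded ribbon unknot whose knot diagram $K$ is a nondegenerate triangle (a 3-stick unknot) and such that the folds at all three vertices are of the same type. Then $\frac{w}{2}\le r_{in}$, where $r_{in}$ is the inradius of the triangle $K$.
   Context: For an oriented polygonal knot diagram $K$ with vertices $v_1,v_2,v_3$ and edges $e_i=[v_i,v_{i+1}]$ (indices mod 3), the fold angle $\theta_i\in[0,\pi]$ at $v_i$ is the angle between $e_{i-1}$ and $e_i$. The folded ribbon $K_w$ of width $w$ is built by placing at each $v_i$ a fold line of length $w/\cos(\theta_i/2)$ centered at $v_i$ perpendicular to the bisector of $\theta_i$, and joining ends of consecutive fold lines by boundary segments parallel to and at distance $w/2$ from $K$ (so the ribbon along each edge is the strip of points within distance $w/2$ of the edge's line, bounded by the fold lines). Folding information $F$ records at each vertex whether the ribbon of $e_i$ lies over (overfold) or under (underfold) the ribbon of $e_{i-1}$; the folds are of the same type if all are overfolds or all are underfolds. $K_{w,F}$ is allowed if the ribbon is immersed away from the fold lines and admits a choice of crossing information (a continuous, antisymmetric, transitive $\pm1$-valued function on pairs of distinct points of the ribbon with the same image in the plane, recording which lies over which) agreeing with $F$. *)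

theory Defs
  imports "HOL-Analysis.Analysis"
begin

text \<open>A triangle knot diagram is given by vertices v 0, v 1, v 2 in the plane (complex numbers);
  edge e_i = [v i, v (nxt i)], indices modulo 3.\<close>

definition nxt :: "nat \<Rightarrow> nat" where "nxt i = (i + 1) mod 3"
definition prv :: "nat \<Rightarrow> nat" where "prv i = (i + 2) mod 3"

definition unitv :: "complex \<Rightarrow> complex" where "unitv z = scaleR (1 / norm z) z"

definition fold_angle :: "(nat \<Rightarrow> complex) \<Rightarrow> nat \<Rightarrow> real" where
  "fold_angle v i = arccos (inner (unitv (v (prv i) - v i)) (unitv (v (nxt i) - v i)))"

definition bisector :: "(nat \<Rightarrow> complex) \<Rightarrow> nat \<Rightarrow> complex" where
  "bisector v i = unitv (v (prv i) - v i) + unitv (v (nxt i) - v i)"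

definition fold_end :: "(nat \<Rightarrow> complex) \<Rightarrow> real \<Rightarrow> nat \<Rightarrow> real \<Rightarrow> complex" where
  "fold_end v w i s = v i + scaleR (s * w / (2 * cos (fold_angle v i / 2))) (unitv (\<i> * bisector v i))"

definition fold_line :: "(nat \<Rightarrow> complex) \<Rightarrow> real \<Rightarrow> nat \<Rightarrow> complex set" where
  "fold_line v w i = closed_segment (fold_end v w i 1) (fold_end v w i (-1))"

definition edge_line :: "(nat \<Rightarrow> complex) \<Rightarrow> nat \<Rightarrow> complex set" where
  "edge_line v i = {v i + scaleR t (v (nxt i) - v i) | t. True}"

text \<open>The ribbon piece along edge e_i: points within distance w/2 of the line of e_i,
  lying between the fold line at v i (on the side of v (nxt i)) and the fold line at
  v (nxt i) (on the side of v i).  The fold lines are perpendicular to the bisectors,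
  so these sides are the half-planes below.\<close>
definition piece :: "(nat \<Rightarrow> complex) \<Rightarrow> real \<Rightarrow> nat \<Rightarrow> complex set" where
  "piece v w i = {p. infdist p (edge_line v i) \<le> w / 2
                    \<and> inner (p - v i) (bisector v i) \<ge> 0
                    \<and> inner (p - v (nxt i)) (bisector v (nxt i)) \<ge> 0}"

text \<open>Points of the abstract ribbon are pairs (i, p) with i < 3 and p in piece i; (i,p) and
  (nxt i, p) are identified when p lies on the common fold line at v (nxt i).\<close>
definition same_pt :: "(nat \<Rightarrow> complex) \<Rightarrow> real \<Rightarrow> nat \<times> complex \<Rightarrow> nat \<times> complex \<Rightarrow> bool" where
  "same_pt v w x y \<longleftrightarrow> snd x = snd y \<and>
     (fst x = fst y
      \<or> (fst y = nxt (fst x) \<and> snd x \<in> fold_line v w (fst y))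
      \<or> (fst x = nxt (fst y) \<and> snd x \<in> fold_line v w (fst x)))"

definition dbl :: "(nat \<Rightarrow> complex) \<Rightarrow> real \<Rightarrow> nat \<Rightarrow> nat \<Rightarrow> complex set" where
  "dbl v w i j = {p. p \<in> piece v w i \<and> p \<in> piece v w j \<and> \<not> same_pt v w (i, p) (j, p)}"

text \<open>Immersion away from the fold lines: consecutive fold lines do not cross inside the strip.\<close>
definition immersed :: "(nat \<Rightarrow> complex) \<Rightarrow> real \<Rightarrow> bool" where
  "immersed v w \<longleftrightarrow> (\<forall>i<3.
     open_segment (fold_end v w i 1) (fold_end v w i (-1)) \<inter>
     open_segment (fold_end v w (nxt i) 1) (fold_end v w (nxt i) (-1)) = {})"

text \<open>Crossing information: c i j p = 1 means the ribbon point (i,p) lies over (j,p).\<close>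
definition crossing_info :: "(nat \<Rightarrow> complex) \<Rightarrow> real \<Rightarrow> (nat \<Rightarrow> nat \<Rightarrow> complex \<Rightarrow> real) \<Rightarrow> bool" where
  "crossing_info v w c \<longleftrightarrow>
     (\<forall>i<3. \<forall>j<3. \<forall>p\<in>dbl v w i j. c i j p = 1 \<or> c i j p = -1)
   \<and> (\<forall>i<3. \<forall>j<3. \<forall>p\<in>dbl v w i j. c j i p = - c i j p)
   \<and> (\<forall>i<3. \<forall>j<3. \<forall>k<3. \<forall>p. p \<in> dbl v w i j \<and> p \<in> dbl v w j k \<and> p \<in> dbl v w i k
          \<longrightarrow> c i j p = 1 \<longrightarrow> c j k p = 1 \<longrightarrow> c i k p = 1)
   \<and> (\<forall>i<3. \<forall>i'<3. \<forall>j<3. \<forall>p. p \<in> dbl v w i j \<and> p \<in> dbl v w i' j \<and> same_pt v w (i, p) (i', p)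
          \<longrightarrow> c i j p = c i' j p)
   \<and> (\<forall>i<3. \<forall>j<3. continuous_on (dbl v w i j) (c i j))"

text \<open>Agreement with folding information F: F i = True means the ribbon of e_i lies over the
  ribbon of e_(i-1) at v i (overfold), False means underfold.\<close>
definition agrees :: "(nat \<Rightarrow> complex) \<Rightarrow> real \<Rightarrow> (nat \<Rightarrow> bool) \<Rightarrow> (nat \<Rightarrow> nat \<Rightarrow> complex \<Rightarrow> real) \<Rightarrow> bool" where
  "agrees v w F c \<longleftrightarrow> (\<forall>i<3. \<exists>\<epsilon>>0. \<forall>p\<in>dbl v w (prv i) i.
       infdist p (fold_line v w i) < \<epsilon> \<longrightarrow> c i (prv i) p = (if F i then 1 else -1))"

definition allowed :: "(nat \<Rightarrow> complex) \<Rightarrow> real \<Rightarrow> (nat \<Rightarrow> bool) \<Rightarrow> bool" where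
  "allowed v w F \<longleftrightarrow> w > 0 \<and> immersed v w \<and> (\<exists>c. crossing_info v w c \<and> agrees v w F c)"

definition inradius :: "complex \<Rightarrow> complex \<Rightarrow> complex \<Rightarrow> real" where
  "inradius a b c = Sup {r. \<exists>z. cball z r \<subseteq> convex hull {a, b, c}}"

end

theory Submission
  imports Defs
begin


definition cr :: "complex \<Rightarrow> complex \<Rightarrow> real" where "cr x y = Re x * Im y - Im x * Re y"

lemma cr_dot: "(cr x y)\<^sup>2 + (inner x y)\<^sup>2 = (norm x)\<^sup>2 * (norm y)\<^sup>2"
  unfolding cr_def inner_complex_def cmod_power2 by (simp add: power2_eq_square algebra_simps)

lemma cr_bound: "\<bar>cr x y\<bar> \<le> norm x * norm y"
proof -
  have "(cr x y)\<^sup>2 \<le> (norm x * norm y)\<^sup>2" using cr_dot[of x y]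
    by (simp add: power_mult_distrib) (smt (verit) zero_le_power2)
  hence "\<bar>cr x y\<bar> \<le> \<bar>norm x * norm y\<bar>" by (simp only: abs_le_square_iff)
  thus ?thesis by simp
qed

lemma dot_bound: "\<bar>inner x y\<bar> \<le> norm x * norm y"
  by (rule Cauchy_Schwarz_ineq2)

lemma unitv_inner_self: "inner x (unitv x) = norm x"
  unfolding unitv_def by (simp add: dot_square_norm power2_eq_square)

lemma inner_unitv_ge: "inner x (unitv y) \<ge> - norm x"
proof (cases "y = 0")
  case True thus ?thesis by (simp add: unitv_def)
next
  case False
  have "inner x (unitv y) = inner x y / norm y" unfolding unitv_def by simp
  moreover have "inner x y \<ge> - (norm x * norm y)" using dot_bound[of x y] by linarith
  moreover have "norm y > 0" using False by simp
  ultimately have "inner x (unitv y) \<ge> - (norm x * norm y) / norm y"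
    using divide_right_mono[of "- (norm x * norm y)" "inner x y" "norm y"] by simp
  thus ?thesis using \<open>norm y > 0\<close> by simp
qed

lemma bis_nonneg: "inner x (unitv x + unitv y) \<ge> 0"
  using unitv_inner_self[of x] inner_unitv_ge[of x y] by (simp add: inner_add_right)

lemma bis_nonneg2: "\<alpha> \<ge> 0 \<Longrightarrow> \<beta> \<ge> 0 \<Longrightarrow> inner (\<alpha> *\<^sub>R x + \<beta> *\<^sub>R y) (unitv x + unitv y) \<ge> 0"
  using bis_nonneg[of x y] bis_nonneg[of y x]
  by (simp add: inner_add_left add.commute)

lemma bis_pos:
  assumes "cr x y \<noteq> 0" "\<alpha> > 0" "\<beta> > 0"
  shows "inner (\<alpha> *\<^sub>R x + \<beta> *\<^sub>R y) (unitv x + unitv y) > 0"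
proof -
  have x0: "norm x > 0" and y0: "norm y > 0" using assms(1) by (auto simp: cr_def)
  have "(cr x y)\<^sup>2 > 0" using assms(1) by simp
  hence "(inner x y)\<^sup>2 < (norm x * norm y)\<^sup>2" using cr_dot[of x y]
    unfolding power_mult_distrib by linarith
  hence "\<not> \<bar>norm x * norm y\<bar> \<le> \<bar>inner x y\<bar>" by (simp only: abs_le_square_iff)
  hence lt: "- (norm x * norm y) < inner x y" by simp
  have "inner x (unitv y) = inner x y / norm y" unfolding unitv_def by simp
  also have "\<dots> > - (norm x * norm y) / norm y" using lt y0 by (rule divide_strict_right_mono)
  finally have "inner x (unitv y) > - norm x" using y0 by simp
  hence h1: "inner x (unitv x + unitv y) > 0" by (simp add: inner_add_right unitv_inner_self)
  have "inner y (unitv x) = inner x y / norm x" unfolding unitv_def by (simp add: inner_commute)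
  also have "\<dots> > - (norm x * norm y) / norm x" using lt x0 by (rule divide_strict_right_mono)
  finally have "inner y (unitv x) > - norm y" using x0 by simp
  hence h2: "inner y (unitv x + unitv y) > 0" by (simp add: inner_add_right unitv_inner_self)
  show ?thesis using h1 h2 assms(2,3) by (simp add: inner_add_left add_pos_pos)
qed


definition inc :: "complex \<Rightarrow> complex \<Rightarrow> complex \<Rightarrow> complex" where
  "inc A B C = scaleR (1/(norm(B-C)+norm(C-A)+norm(A-B)))
     (scaleR (norm(B-C)) A + scaleR (norm(C-A)) B + scaleR (norm(A-B)) C)"
definition rr :: "complex \<Rightarrow> complex \<Rightarrow> complex \<Rightarrow> real" where
  "rr A B C = \<bar>cr (B-A) (C-A)\<bar> / (norm(B-C)+norm(C-A)+norm(A-B))"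

lemma cr_cyc: "cr (C-B) (A-B) = cr (B-A) (C-A)"
  unfolding cr_def by (simp add: algebra_simps)

lemma inc_cyc: "inc B C A = inc A B C"
  unfolding inc_def by (simp add: algebra_simps)

lemma rr_cyc: "rr B C A = rr A B C"
  unfolding rr_def by (simp add: cr_cyc algebra_simps)

lemma inc_swap: "inc A C B = inc A B C"
  unfolding inc_def by (simp add: algebra_simps norm_minus_commute)

lemma rr_swap: "rr A C B = rr A B C"
proof -
  have "cr (C-A) (B-A) = - cr (B-A) (C-A)" by (simp add: cr_def)
  thus ?thesis unfolding rr_def by (simp add: algebra_simps norm_minus_commute)
qed

lemma cr_sum_pos: "cr (B-A) (C-A) \<noteq> 0 \<Longrightarrow> norm(B-C)+norm(C-A)+norm(A-B) > 0"
proof -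
  assume "cr (B-A) (C-A) \<noteq> 0"
  hence "A \<noteq> B" by (auto simp: cr_def)
  hence "norm (A-B) > 0" by simp
  thus ?thesis by (smt (verit) norm_ge_zero)
qed

lemma inc_minus:
  assumes "cr (B-A) (C-A) \<noteq> 0"
  shows "inc A B C - A = (norm(C-A)/(norm(B-C)+norm(C-A)+norm(A-B))) *\<^sub>R (B-A)
            + (norm(A-B)/(norm(B-C)+norm(C-A)+norm(A-B))) *\<^sub>R (C-A)"
proof -
  define s where "s = norm(B-C)+norm(C-A)+norm(A-B)"
  have s: "s \<noteq> 0" using cr_sum_pos[OF assms] s_def by simp
  show ?thesis unfolding inc_def s_def[symmetric]
    using s by (simp add: scaleR_conv_of_real field_simps complex_eq_iff) (simp add: s_def algebra_simps)
qed

lemma inc_pos: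
  assumes "cr (B-A) (C-A) \<noteq> 0"
  shows "inner (inc A B C - A) (unitv (B-A) + unitv (C-A)) > 0"
  unfolding inc_minus[OF assms]
  apply (rule bis_pos[OF assms])
  using cr_sum_pos[OF assms] assms by (auto simp: cr_def intro!: divide_pos_pos)



lemma l1: fixes p q u w N :: real assumes "N \<noteq> 0" "N = p^2+q^2"
  shows "((u - ((u*p+w*q)/N)*p)^2 + (w - ((u*p+w*q)/N)*q)^2) * N = (p*w - q*u)^2"
proof -
  define t where "t = (u*p+w*q)/N"
  have tN: "t * N = u*p+w*q" using assms unfolding t_def by simp
  have "((u - t*p)^2 + (w - t*q)^2) * N = (u^2+w^2)*N - 2*t*N*(u*p+w*q) + (t*N)^2"
    using assms(2) by (simp add: power2_eq_square algebra_simps)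
  also have "\<dots> = (u^2+w^2)*N - (u*p+w*q)^2" using tN by (simp add: power2_eq_square)
  also have "\<dots> = (p*w - q*u)^2" unfolding assms(2) by (simp add: power2_eq_square algebra_simps)
  finally show ?thesis unfolding t_def .
qed
lemma l2: fixes A B C z :: complex
  shows "cr (B-A) (C-A) *\<^sub>R z = cr (B-z) (C-z) *\<^sub>R A + cr (C-z) (A-z) *\<^sub>R B + cr (A-z) (B-z) *\<^sub>R C"
  unfolding cr_def complex_eq_iff by (simp add: algebra_simps)
lemma l3: fixes A B C z :: complex
  shows "cr (B-A) (C-A) = cr (B-z) (C-z) + cr (C-z) (A-z) + cr (A-z) (B-z)"
  unfolding cr_def by (simp add: algebra_simps)
lemma l4: fixes a b c :: real and A B C z :: complex
  shows "(a+b+c) * cr (B-z) (C-z) = a * cr (B-A) (C-A)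
     - cr ((a+b+c) *\<^sub>R z - (a *\<^sub>R A + b *\<^sub>R B + c *\<^sub>R C)) (C-B)"
  unfolding cr_def by (simp add: algebra_simps)

lemma foot_id:
  assumes "x \<noteq> 0"
  shows "(norm (z - (inner z x / (norm x)\<^sup>2) *\<^sub>R x))\<^sup>2 * (norm x)\<^sup>2 = (cr x z)\<^sup>2"
proof -
  have N: "(norm x)\<^sup>2 \<noteq> 0" using assms by simp
  show ?thesis
    using l1[OF N cmod_power2[of x], of "Re z" "Im z"]
    unfolding cmod_power2[of "z - _"] cr_def inner_complex_def
    by (simp add: cmod_power2 mult.commute)
qed

lemma cr_lin: "cr x (a *\<^sub>R x + b *\<^sub>R y) = b * cr x y"
  unfolding cr_def by (simp add: algebra_simps)

lemma inc_dist:
  assumes D: "cr (B-A) (C-A) \<noteq> 0"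
  shows "\<exists>q \<in> {A + t *\<^sub>R (B-A) | t. True}. dist (inc A B C) q \<le> rr A B C"
proof -
  define s where "s = norm(B-C)+norm(C-A)+norm(A-B)"
  have s: "s > 0" using cr_sum_pos[OF D] s_def by simp
  define x where "x = B - A"
  define z where "z = inc A B C - A"
  have x0: "x \<noteq> 0" using D by (auto simp: cr_def x_def)
  define t where "t = inner z x / (norm x)\<^sup>2"
  have z: "z = (norm(C-A)/s) *\<^sub>R x + (norm(A-B)/s) *\<^sub>R (C-A)"
    using inc_minus[OF D] unfolding z_def x_def s_def by simp
  have crz: "cr x z = (norm x / s) * cr (B-A) (C-A)"
    unfolding z cr_lin by (simp add: x_def norm_minus_commute)
  have "(norm (z - t *\<^sub>R x))\<^sup>2 * (norm x)\<^sup>2 = (rr A B C)\<^sup>2 * (norm x)\<^sup>2"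
    unfolding t_def foot_id[OF x0] crz rr_def s_def[symmetric]
    by (simp add: power_mult_distrib power_divide field_simps)
  hence "(norm (z - t *\<^sub>R x))\<^sup>2 = (rr A B C)\<^sup>2" using x0 by simp
  hence "norm (z - t *\<^sub>R x) = rr A B C"
    by (metis norm_ge_zero power2_eq_iff_nonneg rr_def divide_nonneg_nonneg abs_ge_zero s s_def less_imp_le)
  moreover have "dist (inc A B C) (A + t *\<^sub>R (B-A)) = norm (z - t *\<^sub>R x)"
    unfolding dist_norm z_def x_def by (simp add: algebra_simps)
  ultimately have "dist (inc A B C) (A + t *\<^sub>R (B-A)) \<le> rr A B C" by simp
  moreover have "A + t *\<^sub>R (B-A) \<in> {A + t *\<^sub>R (B-A) | t. True}" by blast
  ultimately show ?thesis by blast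
qed

lemma bary:
  assumes D: "cr (B-A) (C-A) \<noteq> 0"
  shows "z = (cr (B-z) (C-z) / cr (B-A) (C-A)) *\<^sub>R A + (cr (C-z) (A-z) / cr (B-A) (C-A)) *\<^sub>R B
             + (cr (A-z) (B-z) / cr (B-A) (C-A)) *\<^sub>R C"
    and "cr (B-z) (C-z) / cr (B-A) (C-A) + cr (C-z) (A-z) / cr (B-A) (C-A) + cr (A-z) (B-z) / cr (B-A) (C-A) = 1"
proof -
  have "z = (1 / cr (B-A) (C-A)) *\<^sub>R (cr (B-A) (C-A) *\<^sub>R z)" using D by simp
  also have "\<dots> = (cr (B-z) (C-z) / cr (B-A) (C-A)) *\<^sub>R A + (cr (C-z) (A-z) / cr (B-A) (C-A)) *\<^sub>R B
             + (cr (A-z) (B-z) / cr (B-A) (C-A)) *\<^sub>R C" by (subst l2[of B A C z]) (simp add: scaleR_add_right)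
  finally show "z = (cr (B-z) (C-z) / cr (B-A) (C-A)) *\<^sub>R A + (cr (C-z) (A-z) / cr (B-A) (C-A)) *\<^sub>R B
             + (cr (A-z) (B-z) / cr (B-A) (C-A)) *\<^sub>R C" .
  show "cr (B-z) (C-z) / cr (B-A) (C-A) + cr (C-z) (A-z) / cr (B-A) (C-A) + cr (A-z) (B-z) / cr (B-A) (C-A) = 1"
    using D l3[of B A C z] by (simp add: add_divide_distrib[symmetric])
qed

lemma cr_shift:
  assumes "a + b + c \<noteq> 0"
  shows "cr (B-z) (C-z) = a * cr (B-A) (C-A) / (a+b+c)
     - cr (z - (1/(a+b+c)) *\<^sub>R (a *\<^sub>R A + b *\<^sub>R B + c *\<^sub>R C)) (C-B)"
proof -
  have e: "z - (1/(a+b+c)) *\<^sub>R (a *\<^sub>R A + b *\<^sub>R B + c *\<^sub>R C) = (1/(a+b+c)) *\<^sub>R ((a+b+c) *\<^sub>R z - (a *\<^sub>R A + b *\<^sub>R B + c *\<^sub>R C))"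
    using assms by (simp add: scaleR_diff_right)
  have cs: "cr (r *\<^sub>R x) y = r * cr x y" for r x y unfolding cr_def by (simp add: algebra_simps)
  define Y where "Y = cr ((a+b+c) *\<^sub>R z - (a *\<^sub>R A + b *\<^sub>R B + c *\<^sub>R C)) (C-B)"
  have "(a+b+c) * cr (B-z) (C-z) = a * cr (B-A) (C-A) - Y" unfolding Y_def by (rule l4)
  hence "cr (B-z) (C-z) = (a * cr (B-A) (C-A) - Y) / (a+b+c)" using assms
    by (simp add: eq_divide_eq mult.commute)
  thus ?thesis unfolding e cs Y_def[symmetric] by (simp add: diff_divide_distrib)
qed



lemma u_nonneg:
  assumes D: "cr (B-A) (C-A) \<noteq> 0" and z: "dist z (inc A B C) \<le> rr A B C"
  shows "cr (B-z) (C-z) * cr (B-A) (C-A) \<ge> 0"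
proof -
  define a where "a = norm (B-C)"
  define s where "s = norm(B-C)+norm(C-A)+norm(A-B)"
  define d where "d = cr (B-A) (C-A)"
  have s: "s > 0" using cr_sum_pos[OF D] s_def by simp
  have I: "inc A B C = (1/(norm(B-C)+norm(C-A)+norm(A-B))) *\<^sub>R
     (norm(B-C) *\<^sub>R A + norm(C-A) *\<^sub>R B + norm(A-B) *\<^sub>R C)" unfolding inc_def by simp
  have e: "cr (B-z) (C-z) = a * d / s - cr (z - inc A B C) (C-B)"
    unfolding I a_def d_def s_def by (rule cr_shift) (use s s_def in simp)
  have "\<bar>cr (z - inc A B C) (C-B)\<bar> \<le> norm (z - inc A B C) * norm (C-B)" by (rule cr_bound)
  also have "\<dots> \<le> rr A B C * a" unfolding a_def using z
    by (simp add: dist_norm norm_minus_commute mult_right_mono)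
  finally have b: "\<bar>cr (z - inc A B C) (C-B)\<bar> \<le> \<bar>d\<bar> / s * a" unfolding rr_def d_def s_def .
  have "\<bar>cr (z - inc A B C) (C-B) * d\<bar> \<le> \<bar>d\<bar> / s * a * \<bar>d\<bar>"
    unfolding abs_mult by (rule mult_right_mono[OF b]) simp
  also have "\<dots> = a * (\<bar>d\<bar> * \<bar>d\<bar>) / s" by (simp add: field_simps)
  also have "\<dots> = a * d * d / s" by (simp only: abs_mult_self_eq mult.assoc)
  finally have "cr (z - inc A B C) (C-B) * d \<le> a * d * d / s" by linarith
  hence "0 \<le> (a * d / s - cr (z - inc A B C) (C-B)) * d" by (simp add: algebra_simps)
  thus ?thesis unfolding e d_def .
qed

lemma ball_hull:
  assumes D: "cr (B-A) (C-A) \<noteq> 0"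
  shows "cball (inc A B C) (rr A B C) \<subseteq> convex hull {A,B,C}"
proof
  fix z assume "z \<in> cball (inc A B C) (rr A B C)"
  hence z: "dist z (inc A B C) \<le> rr A B C" by (simp add: dist_commute)
  define d where "d = cr (B-A) (C-A)"
  have D2: "cr (C-B) (A-B) \<noteq> 0" "cr (A-C) (B-C) \<noteq> 0" using D cr_cyc[of C B A] cr_cyc[of A C B] by auto
  have z2: "dist z (inc B C A) \<le> rr B C A" "dist z (inc C A B) \<le> rr C A B"
    using z by (simp_all add: inc_cyc rr_cyc)
  have p1: "cr (B-z) (C-z) * d \<ge> 0" using u_nonneg[OF D z] d_def by simp
  have p2: "cr (C-z) (A-z) * d \<ge> 0" using u_nonneg[OF D2(1) z2(1)] cr_cyc[of C B A] d_def by simp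
  have p3: "cr (A-z) (B-z) * d \<ge> 0" using u_nonneg[OF D2(2) z2(2)] cr_cyc[of A C B] cr_cyc[of C B A] d_def by simp
  have q: "x * d \<ge> 0 \<Longrightarrow> x / d \<ge> 0" for x
    using D d_def by (auto simp: zero_le_mult_iff zero_le_divide_iff)
  show "z \<in> convex hull {A,B,C}" unfolding convex_hull_3
    using bary[OF D, of z] q[OF p1] q[OF p2] q[OF p3] unfolding d_def by blast
qed



lemma less3: "k < (3::nat) \<Longrightarrow> k = 0 \<or> k = 1 \<or> k = 2" by auto

lemma par_lem:
  fixes p q u w N :: real
  assumes N: "N \<noteq> 0" "N = p^2+q^2" and c: "p*w = q*u"
  shows "u = ((u*p+w*q)/N)*p" "w = ((u*p+w*q)/N)*q"
proof -
  have "(u*p+w*q)*p = u*p*p + q*(p*w)" by (simp add: algebra_simps)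
  also have "\<dots> = u * N" unfolding c N(2) by (simp add: power2_eq_square algebra_simps)
  finally show "u = ((u*p+w*q)/N)*p" using N(1) by (simp add: field_simps)
  have "(u*p+w*q)*q = p*(q*u) + w*q*q" by (simp add: algebra_simps)
  also have "\<dots> = w * N" unfolding c[symmetric] N(2) by (simp add: power2_eq_square algebra_simps)
  finally show "w = ((u*p+w*q)/N)*q" using N(1) by (simp add: field_simps)
qed

lemma ncol_cr: assumes "\<not> collinear {A, B, C}" shows "cr (B-A) (C-A) \<noteq> 0"
proof
  assume h: "cr (B-A) (C-A) = 0"
  have "collinear {A,B,C}"
  proof (cases "B = A")
    case True
    show ?thesis unfolding collinear_alt
      by (rule exI[of _ A], rule exI[of _ "C - A"]) (auto simp: True intro: exI[of _ 0] exI[of _ 1])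
  next
    case False
    define x where "x = B - A"
    have x0: "(norm x)\<^sup>2 \<noteq> 0" using False x_def by simp
    have "C - A = (inner (C-A) x / (norm x)\<^sup>2) *\<^sub>R x"
    proof -
      have c: "Re x * Im (C-A) = Im x * Re (C-A)" using h unfolding x_def cr_def by simp
      note pl = par_lem[OF x0 cmod_power2[of x] c]
      show ?thesis unfolding complex_eq_iff inner_complex_def
        using pl by (simp add: mult.commute)
    qed
    hence "C = A + (inner (C-A) x / (norm x)\<^sup>2) *\<^sub>R x" by (metis add.commute diff_add_cancel)
    moreover have "B = A + 1 *\<^sub>R x" "A = A + 0 *\<^sub>R x" using x_def by auto
    ultimately show ?thesis unfolding collinear_alt by (intro exI[of _ A] exI[of _ x]) blast
  qed
  thus False using assms by simp
qed



lemma fold_end_perp: "inner (fold_end v w k s - v k) (bisector v k) = 0"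
proof -
  have "inner (\<i> * b) b = 0" for b :: complex by (simp add: inner_complex_def)
  thus ?thesis unfolding fold_end_def unitv_def by simp
qed

lemma fold_line_perp: "p \<in> fold_line v w k \<Longrightarrow> inner (p - v k) (bisector v k) = 0"
proof -
  assume "p \<in> fold_line v w k"
  then obtain u where p: "p = (1 - u) *\<^sub>R fold_end v w k 1 + u *\<^sub>R fold_end v w k (-1)"
    unfolding fold_line_def closed_segment_def by blast
  have "p - v k = (1 - u) *\<^sub>R (fold_end v w k 1 - v k) + u *\<^sub>R (fold_end v w k (-1) - v k)"
    unfolding p by (simp add: algebra_simps)
  thus ?thesis using fold_end_perp[of v w k] by (simp add: inner_add_left)
qed

lemma vk_fold_line: "v k \<in> fold_line v w k"
proof -
  have "v k = (1 - 1/2) *\<^sub>R fold_end v w k 1 + (1/2) *\<^sub>R fold_end v w k (-1)"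
    unfolding fold_end_def by (simp add: algebra_simps scaleR_conv_of_real)
  thus ?thesis unfolding fold_line_def closed_segment_def mem_Collect_eq
    by (intro exI[of _ "1/2"]) simp
qed

lemma edge_line_comb: "a \<in> edge_line v j \<Longrightarrow> q \<in> edge_line v j \<Longrightarrow> a + t *\<^sub>R (q - a) \<in> edge_line v j"
proof -
  assume "a \<in> edge_line v j" "q \<in> edge_line v j"
  then obtain s1 s2 where a: "a = v j + s1 *\<^sub>R (v (nxt j) - v j)" and q: "q = v j + s2 *\<^sub>R (v (nxt j) - v j)"
    unfolding edge_line_def by blast
  have "a + t *\<^sub>R (q - a) = v j + (s1 + t * (s2 - s1)) *\<^sub>R (v (nxt j) - v j)"
    unfolding a q by (simp add: algebra_simps)
  thus ?thesis unfolding edge_line_def by blast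
qed

lemma vk_edge: "v k \<in> edge_line v k" unfolding edge_line_def by (auto intro: exI[of _ 0])
lemma vk_edge_prv: "k < 3 \<Longrightarrow> v k \<in> edge_line v (prv k)"
proof -
  assume "k < 3"
  hence "k = 0 \<or> k = 1 \<or> k = 2" by (rule less3)
  hence "nxt (prv k) = k" by (elim disjE) (auto simp add: nxt_def prv_def)
  hence "v k = v (prv k) + 1 *\<^sub>R (v (nxt (prv k)) - v (prv k))" by simp
  thus ?thesis unfolding edge_line_def by blast
qed

lemma seg_infdist:
  assumes "a \<in> edge_line v j" "q \<in> edge_line v j" "dist I q \<le> r" "0 \<le> t" "t \<le> 1"
  shows "infdist (a + t *\<^sub>R (I - a)) (edge_line v j) \<le> r"
proof -
  have "dist (a + t *\<^sub>R (I - a)) (a + t *\<^sub>R (q - a)) = t * dist I q"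
    using assms(4) by (simp add: dist_norm algebra_simps flip: scaleR_diff_right)
  also have "\<dots> \<le> dist I q" using assms(4,5) by (simp add: mult_left_le_one_le)
  finally have "dist (a + t *\<^sub>R (I - a)) (a + t *\<^sub>R (q - a)) \<le> r" using assms(3) by linarith
  thus ?thesis by (rule infdist_le2[OF edge_line_comb[OF assms(1,2)]])
qed

lemma hull_half: "p \<in> convex hull {A,B,C} \<Longrightarrow> inner (p - A) (unitv (C-A) + unitv (B-A)) \<ge> 0"
proof -
  assume "p \<in> convex hull {A,B,C}"
  then obtain u1 u2 u3 where u: "0 \<le> u1" "0 \<le> u2" "0 \<le> u3" "u1+u2+u3 = 1"
    and p: "p = u1 *\<^sub>R A + u2 *\<^sub>R B + u3 *\<^sub>R C" unfolding convex_hull_3 by blast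
  have "p - A = u3 *\<^sub>R (C - A) + u2 *\<^sub>R (B - A)"
  proof -
    have "u1 = 1 - u2 - u3" using u(4) by simp
    hence "p = (1 - u2 - u3) *\<^sub>R A + u2 *\<^sub>R B + u3 *\<^sub>R C" using p by simp
    thus ?thesis by (simp add: algebra_simps)
  qed
  thus ?thesis using bis_nonneg2[OF u(3) u(2)] by simp
qed



lemma inrad_ge:
  assumes "cball z \<rho> \<subseteq> convex hull {a,b,c}"
  shows "\<rho> \<le> inradius a b c"
proof -
  have "bounded (convex hull {a,b,c})" by (rule bounded_convex_hull) simp
  then obtain M where M: "\<forall>x\<in>convex hull {a,b,c}. norm x \<le> M" unfolding bounded_iff by blast
  have "a \<in> convex hull {a,b,c}" using hull_subset[of "{a,b,c}" convex] by blast
  hence "norm a \<le> M" using M by blast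
  hence M0: "M \<ge> 0" using norm_ge_zero[of a] by linarith
  have bdd: "bdd_above {r. \<exists>z. cball z r \<subseteq> convex hull {a, b, c}}"
  proof (rule bdd_aboveI[of _ M], clarify)
    fix r z assume h: "cball z r \<subseteq> convex hull {a,b,c}"
    show "r \<le> M"
    proof (cases "r \<ge> 0")
      case True
      have "dist z (z + of_real r) = r" "dist z (z - of_real r) = r" using True
        by (simp_all add: dist_norm)
      hence c1: "z + of_real r \<in> cball z r" and c2: "z - of_real r \<in> cball z r" unfolding mem_cball by simp_all
      have "norm (z + of_real r) \<le> M" using M subsetD[OF h c1] by blast
      moreover have "norm (z - of_real r) \<le> M" using M subsetD[OF h c2] by blast
      moreover have "2 * r = norm ((z + of_real r) - (z - of_real r))" using True by simp
      moreover have "norm ((z + of_real r) - (z - of_real r)) \<le> norm (z + of_real r) + norm (z - of_real r)"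
        by (rule norm_triangle_ineq4)
      ultimately show ?thesis by linarith
    next
      case False thus ?thesis using M0 by simp
    qed
  qed
  show ?thesis unfolding inradius_def by (rule cSup_upper[OF _ bdd]) (use assms in blast)
qed

lemma cr_anti: "cr x y = - cr y x" by (simp add: cr_def)



lemma idx: "k < 3 \<Longrightarrow> prv k < 3 \<and> nxt k < 3 \<and> nxt (prv k) = k \<and> prv k \<noteq> k \<and> prv k \<noteq> nxt k"
  by (drule less3) (auto simp: nxt_def prv_def)

lemma idxv: "nxt 0 = 1" "nxt 1 = 2" "nxt 2 = 0" "prv 0 = 2" "prv 1 = 0" "prv 2 = 1"
  by (simp_all add: nxt_def prv_def)

lemma bisv: "bisector v 0 = unitv (v 2 - v 0) + unitv (v 1 - v 0)"
   "bisector v 1 = unitv (v 0 - v 1) + unitv (v 2 - v 1)"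
   "bisector v 2 = unitv (v 1 - v 2) + unitv (v 0 - v 2)"
  unfolding bisector_def idxv by simp_all

lemma edgev: "edge_line v 0 = {v 0 + t *\<^sub>R (v 1 - v 0) | t. True}"
   "edge_line v 1 = {v 1 + t *\<^sub>R (v 2 - v 1) | t. True}"
   "edge_line v 2 = {v 2 + t *\<^sub>R (v 0 - v 2) | t. True}"
  unfolding edge_line_def idxv by simp_all

theorem theorem5p1:
  fixes v :: "nat \<Rightarrow> complex" and w :: real and F :: "nat \<Rightarrow> bool"
  assumes "\<not> collinear {v 0, v 1, v 2}"
    and "allowed v w F"
    and "F 0 = F 1" and "F 1 = F 2"
  shows "w / 2 \<le> inradius (v 0) (v 1) (v 2)"
proof (rule ccontr)
  assume contra: "\<not> w / 2 \<le> inradius (v 0) (v 1) (v 2)"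
  have D: "cr (v 1 - v 0) (v 2 - v 0) \<noteq> 0" by (rule ncol_cr[OF assms(1)])
  define I where "I = inc (v 0) (v 1) (v 2)"
  define r where "r = rr (v 0) (v 1) (v 2)"
  define H where "H = convex hull {v 0, v 1, v 2}"
  have ball: "cball I r \<subseteq> H" unfolding I_def r_def H_def by (rule ball_hull[OF D])
  have r0: "r \<ge> 0" unfolding r_def rr_def using cr_sum_pos[OF D] by simp
  have IH: "I \<in> H" using ball r0 by auto
  have "r \<le> inradius (v 0) (v 1) (v 2)" using inrad_ge ball unfolding H_def by blast
  hence rw: "r \<le> w/2" using contra by linarith
  have D1: "cr (v 2 - v 1) (v 0 - v 1) \<noteq> 0" using D cr_cyc[of "v 2" "v 1" "v 0"] by simp
  have D2: "cr (v 0 - v 2) (v 1 - v 2) \<noteq> 0" using D1 cr_cyc[of "v 0" "v 2" "v 1"] by simp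
  have Ic1: "inc (v 1) (v 2) (v 0) = I" "inc (v 2) (v 0) (v 1) = I"
    unfolding I_def using inc_cyc[of "v 0" "v 1" "v 2"] inc_cyc[of "v 1" "v 2" "v 0"] by simp_all
  have rc1: "rr (v 1) (v 2) (v 0) = r" "rr (v 2) (v 0) (v 1) = r"
    unfolding r_def using rr_cyc[of "v 0" "v 1" "v 2"] rr_cyc[of "v 1" "v 2" "v 0"] by simp_all
  have Is: "inc (v 0) (v 2) (v 1) = I" "inc (v 1) (v 0) (v 2) = I" "inc (v 2) (v 1) (v 0) = I"
    using Ic1 inc_swap[of "v 0" "v 2" "v 1"] inc_swap[of "v 1" "v 0" "v 2"] inc_swap[of "v 2" "v 1" "v 0"]
    unfolding I_def by simp_all
  have F1: "\<exists>q\<in>edge_line v k. dist I q \<le> r" if k: "k < 3" for k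
  proof -
    have "k = 0 \<or> k = 1 \<or> k = 2" using less3[OF k] .
    moreover have "\<exists>q\<in>edge_line v 0. dist I q \<le> r"
      using inc_dist[OF D] unfolding edgev I_def r_def .
    moreover have "\<exists>q\<in>edge_line v 1. dist I q \<le> r"
      using inc_dist[OF D1] unfolding edgev Ic1 rc1 .
    moreover have "\<exists>q\<in>edge_line v 2. dist I q \<le> r"
      using inc_dist[OF D2] unfolding edgev Ic1 rc1 .
    ultimately show ?thesis by blast
  qed
  have s1: "{v 1, v 2, v 0} = {v 0, v 1, v 2}" "{v 2, v 0, v 1} = {v 0, v 1, v 2}" by auto
  have H1: "H = convex hull {v 1, v 2, v 0}" "H = convex hull {v 2, v 0, v 1}"
    unfolding H_def s1 by (rule refl)+
  have F2: "inner (p - v k) (bisector v k) \<ge> 0" if k: "k < 3" and p: "p \<in> H" for k p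
  proof -
    have "k = 0 \<or> k = 1 \<or> k = 2" using less3[OF k] .
    moreover have "inner (p - v 0) (bisector v 0) \<ge> 0"
      unfolding bisv by (rule hull_half[of p "v 0" "v 1" "v 2"]) (fact p[unfolded H_def])
    moreover have "inner (p - v 1) (bisector v 1) \<ge> 0"
      unfolding bisv by (rule hull_half[of p "v 1" "v 2" "v 0"]) (fact p[unfolded H1(1)])
    moreover have "inner (p - v 2) (bisector v 2) \<ge> 0"
      unfolding bisv by (rule hull_half[of p "v 2" "v 0" "v 1"]) (fact p[unfolded H1(2)])
    ultimately show ?thesis by blast
  qed
  have F3: "inner (I - v k) (bisector v k) > 0" if k: "k < 3" for k
  proof -
    have "k = 0 \<or> k = 1 \<or> k = 2" using less3[OF k] .
    moreover
    have "cr (v 2 - v 0) (v 1 - v 0) \<noteq> 0" using D cr_anti[of "v 2 - v 0" "v 1 - v 0"] by simp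
    from inc_pos[OF this] have "inner (I - v 0) (bisector v 0) > 0" unfolding Is bisv .
    moreover
    have "cr (v 0 - v 1) (v 2 - v 1) \<noteq> 0" using D1 cr_anti[of "v 0 - v 1" "v 2 - v 1"] by simp
    from inc_pos[OF this] have "inner (I - v 1) (bisector v 1) > 0" unfolding Is bisv .
    moreover
    have "cr (v 1 - v 2) (v 0 - v 2) \<noteq> 0" using D2 cr_anti[of "v 1 - v 2" "v 0 - v 2"] by simp
    from inc_pos[OF this] have "inner (I - v 2) (bisector v 2) > 0" unfolding Is bisv .
    ultimately show ?thesis by blast
  qed
  have vH: "v k \<in> H" if "k < 3" for k
  proof -
    have "{v 0, v 1, v 2} \<subseteq> H" unfolding H_def by (rule hull_subset)
    thus ?thesis using less3[OF that] by auto
  qed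
  have piece: "p \<in> piece v w k" if "k < 3" "p \<in> H" "infdist p (edge_line v k) \<le> w/2" for k p
  proof -
    have n: "nxt k < 3" using idx[OF that(1)] by blast
    show ?thesis unfolding piece_def mem_Collect_eq
      by (intro conjI that(3) F2[OF that(1,2)] F2[OF n that(2)])
  qed
  have Inf: "I \<notin> fold_line v w k" if "k < 3" for k
    using fold_line_perp[of I v w k] F3[OF that] by auto
  have Ipiece: "I \<in> piece v w k" if k: "k < 3" for k
  proof -
    obtain q where "q \<in> edge_line v k" "dist I q \<le> r" using F1[OF k] by blast
    hence "infdist I (edge_line v k) \<le> w/2" using rw by (intro infdist_le2) auto
    thus ?thesis using piece k IH by blast
  qed
  have Idbl: "I \<in> dbl v w i j" if "i < 3" "j < 3" "i \<noteq> j" for i j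
  proof -
    have "\<not> same_pt v w (i, I) (j, I)" unfolding same_pt_def fst_conv snd_conv
      using that(3) Inf[OF that(1)] Inf[OF that(2)] by blast
    thus ?thesis unfolding dbl_def mem_Collect_eq using Ipiece[OF that(1)] Ipiece[OF that(2)] by blast
  qed
  define P where "P k t = v k + t *\<^sub>R (I - v k)" for k t
  have Pdbl: "P k t \<in> dbl v w k (prv k) \<and> P k t \<in> dbl v w (prv k) k"
    if k: "k < 3" and t: "0 < t" "t \<le> 1" for k t
  proof -
    note ix = idx[OF k]
    have eqP: "P k t = (1 - t) *\<^sub>R v k + t *\<^sub>R I" unfolding P_def by (simp add: algebra_simps)
    have cvx: "convex H" unfolding H_def by (rule convex_convex_hull)
    have "(1 - t) *\<^sub>R v k + t *\<^sub>R I \<in> H"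
      using cvx[unfolded convex_alt, rule_format, OF vH[OF k] IH, of t] t by simp
    hence PH: "P k t \<in> H" unfolding eqP .
    obtain q where q: "q \<in> edge_line v k" "dist I q \<le> r" using F1[OF k] by blast
    obtain q' where q': "q' \<in> edge_line v (prv k)" "dist I q' \<le> r" using F1[of "prv k"] ix by blast
    have "infdist (P k t) (edge_line v k) \<le> r" unfolding P_def
      by (rule seg_infdist[OF vk_edge q]) (use t in auto)
    hence p1: "P k t \<in> piece v w k" using piece[OF k PH] rw by simp
    have "infdist (P k t) (edge_line v (prv k)) \<le> r" unfolding P_def
      by (rule seg_infdist[OF vk_edge_prv[OF k] q']) (use t in auto)
    hence p2: "P k t \<in> piece v w (prv k)" using piece[of "prv k" "P k t"] ix PH rw by simp
    have "inner (P k t - v k) (bisector v k) = t * inner (I - v k) (bisector v k)"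
      unfolding P_def by simp
    hence "inner (P k t - v k) (bisector v k) > 0" using F3[OF k] t by simp
    hence nf: "P k t \<notin> fold_line v w k" using fold_line_perp[of "P k t" v w k] by auto
    have "\<not> same_pt v w (k, P k t) (prv k, P k t)" "\<not> same_pt v w (prv k, P k t) (k, P k t)"
      unfolding same_pt_def fst_conv snd_conv using nf ix by metis+
    thus ?thesis unfolding dbl_def mem_Collect_eq using p1 p2 by blast
  qed
  obtain c where ci: "crossing_info v w c" and ag: "agrees v w F c"
    using assms(2) unfolding allowed_def by blast
  note cc = ci[unfolded crossing_info_def]
  note pm = conjunct1[OF cc]
  note anti = conjunct1[OF conjunct2[OF cc]]
  note tr = conjunct1[OF conjunct2[OF conjunct2[OF cc]]]
  note cont = conjunct2[OF conjunct2[OF conjunct2[OF conjunct2[OF cc]]]]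
  have val: "c k (prv k) I = (if F k then 1 else -1)" if k: "k < 3" for k
  proof -
    note ix = idx[OF k]
    obtain \<epsilon> where e0: "\<epsilon> > 0" and eps: "\<forall>p\<in>dbl v w (prv k) k.
       infdist p (fold_line v w k) < \<epsilon> \<longrightarrow> c k (prv k) p = (if F k then 1 else -1)"
      using ag k unfolding agrees_def by blast
    define n where "n = norm (I - v k)"
    define t0 where "t0 = min 1 (\<epsilon> / (2 * (n + 1)))"
    have n0: "n \<ge> 0" unfolding n_def by simp
    have t0: "0 < t0" "t0 \<le> 1" unfolding t0_def using e0 n0 by auto
    have "t0 * (n + 1) \<le> \<epsilon> / (2 * (n + 1)) * (n + 1)"
      unfolding t0_def by (rule mult_right_mono) (use n0 in auto)
    also have "\<dots> = \<epsilon> / 2" using n0 by (simp add: field_simps)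
    finally have a: "t0 * (n + 1) \<le> \<epsilon> / 2" .
    have "t0 * n \<le> t0 * (n + 1)" using t0 by (simp add: mult_left_mono)
    hence "t0 * n < \<epsilon>" using a e0 by linarith
    moreover have "dist (P k t0) (v k) = t0 * n" unfolding P_def n_def dist_norm using t0 by simp
    ultimately have "infdist (P k t0) (fold_line v w k) < \<epsilon>"
      using infdist_le[OF vk_fold_line, of "P k t0" v w k] by linarith
    hence ve: "c k (prv k) (P k t0) = (if F k then 1 else -1)" using eps Pdbl[OF k t0] by blast
    define S where "S = P k ` {0<..1}"
    have Ssub: "S \<subseteq> dbl v w k (prv k)" unfolding S_def using Pdbl[OF k] by auto
    have "continuous_on {0<..1} (P k)" unfolding P_def by (intro continuous_intros)
    hence cS: "connected S" unfolding S_def by (rule connected_continuous_image) simp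
    have "continuous_on (dbl v w k (prv k)) (c k (prv k))" using cont k ix by simp
    hence "continuous_on S (c k (prv k))" using continuous_on_subset Ssub by blast
    hence cG: "connected (c k (prv k) ` S)" using cS by (rule connected_continuous_image)
    have "\<forall>p\<in>dbl v w k (prv k). c k (prv k) p = 1 \<or> c k (prv k) p = -1" using pm k ix by simp
    hence G: "c k (prv k) ` S \<subseteq> {1, -1}" using Ssub by auto
    have a1: "c k (prv k) (P k t0) \<in> c k (prv k) ` S" unfolding S_def using t0 by auto
    have "P k 1 = I" unfolding P_def by simp
    hence a2: "c k (prv k) I \<in> c k (prv k) ` S" unfolding S_def by force
    show ?thesis
    proof (rule ccontr)
      assume ne: "c k (prv k) I \<noteq> (if F k then 1 else -1)"
      have m: "(-1::real) \<in> c k (prv k) ` S \<and> (1::real) \<in> c k (prv k) ` S"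
        using a1 a2 ve ne G by (cases "F k") auto
      have iv: "\<forall>x\<in>c k (prv k) ` S. \<forall>y\<in>c k (prv k) ` S. \<forall>z. x \<le> z \<longrightarrow> z \<le> y \<longrightarrow> z \<in> c k (prv k) ` S"
        using cG unfolding connected_iff_interval .
      have "(0::real) \<in> c k (prv k) ` S"
        using iv[rule_format, OF conjunct1[OF m] conjunct2[OF m], of 0] by simp
      thus False using G by auto
    qed
  qed
  have v1: "c 1 0 I = (if F 0 then 1 else -1)" using val[of 1] assms(3) unfolding idxv by simp
  have v2: "c 2 1 I = (if F 0 then 1 else -1)" using val[of 2] assms(3,4) unfolding idxv by simp
  have v0: "c 0 2 I = (if F 0 then 1 else -1)" using val[of 0] unfolding idxv by simp
  have d: "I \<in> dbl v w 1 0" "I \<in> dbl v w 0 2" "I \<in> dbl v w 1 2" "I \<in> dbl v w 2 0" "I \<in> dbl v w 0 1" "I \<in> dbl v w 2 1"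
    using Idbl[of 1 0] Idbl[of 0 2] Idbl[of 1 2] Idbl[of 2 0] Idbl[of 0 1] Idbl[of 2 1] by simp_all
  show False
  proof (cases "F 0")
    case True
    have "c 1 2 I = 1" using tr[rule_format, of 1 0 2 I] d v1 v0 True by simp
    moreover have "c 2 1 I = - c 1 2 I" using anti[rule_format, of 1 2 I] d by simp
    ultimately show False using v2 True by simp
  next
    case False
    have a: "c 0 1 I = 1" using anti[rule_format, of 1 0 I] d v1 False by simp
    have b: "c 2 0 I = 1" using anti[rule_format, of 0 2 I] d v0 False by simp
    have "c 2 1 I = 1" using tr[rule_format, of 2 0 1 I] d a b by simp
    thus False using v2 False by simp
  qed
qed


end
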